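(* Let $G=(V,E)$ be a graph with arboricity $a$ and unique node identifiers. Consider the following procedure, run in phases $i=1,2,\dots$. At the beginning of phase $i$, let $d_i(u)$ be the number of edges incident to $u$ not yet assigned a direction, and let $\overline{d_i}=\sum_{u\in V}d_i(u)/|\{u\in V\mid d_i(u)>0\}|$. In phase $i$, node $u$ is inactive if $d_i(u)=0$, active if $0<d_i(u)\le 2\overline{d_i}$, and waiting if $d_i(u)>2\overline{d_i}$; each undirected edge $\{u,v\}$ is directed from $u$ to $v$ if $u$ is active and $v$ is waiting, or if both are active and $\mathrm{id}(u)<\mathrm{id}(v)$. Then after $O(\log n)$ phases all edges are directed, and the resulting orientation is an $O(a)$-orientation.
   Context: $n=|V|$. The arboricity of $G$ is the minimum number of forests into which its edge set can be partitioned. An orientation assigns each edge a direction; a $k$-orientation is one in which every node has at most $k$ outgoing edges. *)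

theory Defs
  imports Complex_Main
begin

definition simple_graph :: "'a set \<Rightarrow> 'a set set \<Rightarrow> bool" where
  "simple_graph V E \<longleftrightarrow> finite V \<and>
     (\<forall>e\<in>E. \<exists>u v. u \<noteq> v \<and> u \<in> V \<and> v \<in> V \<and> e = {u, v})"

definition is_cycle :: "'a set set \<Rightarrow> 'a list \<Rightarrow> bool" where
  "is_cycle F cs \<longleftrightarrow> length cs \<ge> 3 \<and> distinct cs \<and>
     (\<forall>i < length cs. {cs ! i, cs ! ((i + 1) mod length cs)} \<in> F)"

definition is_forest :: "'a set set \<Rightarrow> bool" where
  "is_forest F \<longleftrightarrow> \<not> (\<exists>cs. is_cycle F cs)"

definition forest_partition :: "'a set set \<Rightarrow> nat \<Rightarrow> bool" where
  "forest_partition E k \<longleftrightarrow> (\<exists>f :: 'a set \<Rightarrow> nat.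
     (\<forall>e\<in>E. f e < k) \<and> (\<forall>j<k. is_forest {e\<in>E. f e = j}))"

definition arboricity :: "'a set set \<Rightarrow> nat" where
  "arboricity E = (LEAST k. forest_partition E k)"

text \<open>State of the procedure: (U, D) with U the still undirected edges and D the set
  of directed edges (u,v) meaning u \<rightarrow> v.\<close>
definition rdeg :: "'a set set \<Rightarrow> 'a \<Rightarrow> nat" where
  "rdeg U u = card {e\<in>U. u \<in> e}"

definition avg_deg :: "'a set \<Rightarrow> 'a set set \<Rightarrow> real" where
  "avg_deg V U = real (\<Sum>u\<in>V. rdeg U u) / real (card {u\<in>V. rdeg U u > 0})"

definition is_active :: "'a set \<Rightarrow> 'a set set \<Rightarrow> 'a \<Rightarrow> bool" where
  "is_active V U u \<longleftrightarrow> 0 < rdeg U u \<and> real (rdeg U u) \<le> 2 * avg_deg V U"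

definition is_waiting :: "'a set \<Rightarrow> 'a set set \<Rightarrow> 'a \<Rightarrow> bool" where
  "is_waiting V U u \<longleftrightarrow> real (rdeg U u) > 2 * avg_deg V U"

definition directs :: "'a set \<Rightarrow> ('a \<Rightarrow> nat) \<Rightarrow> 'a set set \<Rightarrow> 'a \<Rightarrow> 'a \<Rightarrow> bool" where
  "directs V ident U u v \<longleftrightarrow> {u, v} \<in> U \<and> u \<noteq> v \<and>
     ((is_active V U u \<and> is_waiting V U v) \<or>
      (is_active V U u \<and> is_active V U v \<and> ident u < ident v))"

definition phase :: "'a set \<Rightarrow> ('a \<Rightarrow> nat) \<Rightarrow> 'a set set \<times> ('a \<times> 'a) set
                      \<Rightarrow> 'a set set \<times> ('a \<times> 'a) set" where
  "phase V ident S = (let U = fst S; D = snd S in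
     ({e\<in>U. \<not> (\<exists>u v. e = {u, v} \<and> directs V ident U u v)},
      D \<union> {(u, v). directs V ident U u v}))"

definition state_after :: "'a set \<Rightarrow> 'a set set \<Rightarrow> ('a \<Rightarrow> nat) \<Rightarrow> nat
                            \<Rightarrow> 'a set set \<times> ('a \<times> 'a) set" where
  "state_after V E ident t = (phase V ident ^^ t) (E, {})"

definition out_deg :: "('a \<times> 'a) set \<Rightarrow> 'a \<Rightarrow> nat" where
  "out_deg D u = card {v. (u, v) \<in> D}"

end

theory Submission
  imports Defs
begin


definition gpath :: "'a set set \<Rightarrow> 'a list \<Rightarrow> bool" where
 "gpath F p \<longleftrightarrow> distinct p \<and> 2 \<le> length p \<and> (\<forall>i. Suc i < length p \<longrightarrow> {p!i, p!Suc i} \<in> F)"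

lemma gpath_set:
  assumes "gpath F p" shows "set p \<subseteq> \<Union>F"
proof
  fix x assume "x \<in> set p"
  then obtain i where i: "i < length p" "x = p!i" by (auto simp: in_set_conv_nth)
  show "x \<in> \<Union>F"
  proof (cases "Suc i < length p")
    case True
    then have "{p!i, p!Suc i} \<in> F" using assms by (auto simp: gpath_def)
    then show ?thesis using i by blast
  next
    case False
    then have "i > 0" using assms i by (auto simp: gpath_def)
    have "Suc (i-1) < length p" using \<open>i>0\<close> i by simp
    then have "{p!(i-1), p!Suc (i-1)} \<in> F" using assms unfolding gpath_def by blast
    moreover have "p!Suc (i-1) = x" using \<open>i>0\<close> i by simp
    ultimately show ?thesis by blast
  qed
qed

lemma leaf_exists:
  assumes fin: "finite F" and two: "\<forall>e\<in>F. \<exists>u v. u \<noteq> v \<and> e = {u,v}" and ne: "F \<noteq> {}"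
    and nc: "\<not>(\<exists>cs. is_cycle F cs)"
  shows "\<exists>x e. e \<in> F \<and> x \<in> e \<and> (\<forall>e'\<in>F. x \<in> e' \<longrightarrow> e' = e)"
proof -
  have finW: "finite (\<Union>F)" using two by (intro finite_Union[OF fin]) auto
  have len: "length p \<le> card (\<Union>F)" if "gpath F p" for p
  proof -
    have "length p = card (set p)" using that distinct_card[of p] by (simp add: gpath_def)
    also have "\<dots> \<le> card (\<Union>F)" using card_mono[OF finW gpath_set[OF that]] .
    finally show ?thesis .
  qed
  obtain e0 where e0: "e0 \<in> F" using ne by auto
  then obtain u v where uv: "u \<noteq> v" "e0 = {u,v}" using two by blast
  have g0: "gpath F [u,v]" using uv e0 by (auto simp: gpath_def less_Suc_eq)
  define L where "L = length ` {p. gpath F p}"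
  define m where "m = Max L"
  have finL: "finite L" unfolding L_def
    by (rule finite_subset[of _ "{..card (\<Union>F)}"]) (auto intro: len)
  have "L \<noteq> {}" using g0 L_def by auto
  then have "m \<in> L" using finL m_def Max_in by blast
  then obtain p where gp: "gpath F p" "length p = m" unfolding L_def by auto
  have maxp: "length q \<le> m" if "gpath F q" for q
  proof -
    have "length q \<in> L" using that L_def by auto
    then show ?thesis using finL m_def by simp
  qed
  define x where "x = p!0"
  define y where "y = p!1"
  have lp: "2 \<le> length p" using gp by (simp add: gpath_def)
  have exy: "{x,y} \<in> F" using gp lp by (auto simp: gpath_def x_def y_def)
  have dp: "distinct p" using gp by (simp add: gpath_def)
  have "\<forall>e'\<in>F. x \<in> e' \<longrightarrow> e' = {x,y}"
  proof (intro ballI impI)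
    fix e' assume e'F: "e' \<in> F" and xe: "x \<in> e'"
    obtain a b where ab: "a \<noteq> b" "e' = {a,b}" using two e'F by blast
    obtain z where z: "z \<noteq> x" "e' = {x,z}"
    proof (cases "x = a")
      case True then show ?thesis using that[of b] ab by simp
    next
      case False then have "x = b" using ab xe by blast
      then show ?thesis using that[of a] ab by (simp add: insert_commute)
    qed
    show "e' = {x,y}"
    proof (cases "z = y")
      case True then show ?thesis using z by simp
    next
      case zy: False
      show ?thesis
      proof (cases "z \<in> set p")
        case False
        have "gpath F (z#p)"
          unfolding gpath_def
        proof (intro conjI allI impI)
          show "distinct (z#p)" using False dp by simp
          show "2 \<le> length (z#p)" using lp by simp
          fix i assume i: "Suc i < length (z#p)"
          show "{(z#p)!i, (z#p)!Suc i} \<in> F"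
          proof (cases i)
            case 0
            have "{z, p!0} = e'" using z(2) x_def insert_commute[of z x "{}"] by simp
            then show ?thesis using e'F 0 by simp
          next
            case (Suc j) then show ?thesis using i gp by (simp add: gpath_def)
          qed
        qed
        then have "length (z#p) \<le> m" by (rule maxp)
        then show ?thesis using gp by simp
      next
        case True
        then obtain j where j: "j < length p" "z = p!j" by (auto simp: in_set_conv_nth)
        have "j \<noteq> 0"
        proof
          assume "j = 0" then show False using j z x_def by simp
        qed
        moreover have "j \<noteq> 1"
        proof
          assume "j = 1" then show False using j zy y_def by simp
        qed
        ultimately have j2: "2 \<le> j" by simp
        define cs where "cs = take (Suc j) p"
        have lcs: "length cs = Suc j" using j cs_def by simp
        have "is_cycle F cs"
          unfolding is_cycle_def
        proof (intro conjI allI impI)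
          show "3 \<le> length cs" using lcs j2 by simp
          show "distinct cs" using dp cs_def by simp
          fix i assume i: "i < length cs"
          show "{cs ! i, cs ! ((i + 1) mod length cs)} \<in> F"
          proof (cases "i < j")
            case True
            then have "(i+1) mod length cs = Suc i" using lcs by simp
            moreover have "{p!i, p!Suc i} \<in> F" using gp True j by (auto simp: gpath_def)
            moreover have "cs!i = p!i" "cs!Suc i = p!Suc i" using cs_def True by simp_all
            ultimately show ?thesis by simp
          next
            case False
            then have ij: "i = j" using i lcs by simp
            then have "(i+1) mod length cs = 0" using lcs by simp
            moreover have "cs!i = z" "cs!0 = x" using ij cs_def j z x_def by simp_all
            moreover have "{z, x} = e'" using z(2) insert_commute[of z x "{}"] by simp
            ultimately show ?thesis using e'F by simp
          qed
        qed
        then show ?thesis using nc by blast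
      qed
    qed
  qed
  then show ?thesis using exy by blast
qed

lemma cycle_mono: "is_cycle F cs \<Longrightarrow> F \<subseteq> G \<Longrightarrow> is_cycle G cs"
  unfolding is_cycle_def by (auto simp: subset_iff)

lemma forest_card:
  assumes "finite F" "\<forall>e\<in>F. \<exists>u v. u \<noteq> v \<and> e = {u,v}" "\<not>(\<exists>cs. is_cycle F cs)"
  shows "card F \<le> card (\<Union>F)"
  using assms
proof (induction "card F" arbitrary: F rule: less_induct)
  case less
  show ?case
  proof (cases "F = {}")
    case True then show ?thesis by simp
  next
    case False
    have "\<exists>x e. e \<in> F \<and> x \<in> e \<and> (\<forall>e'\<in>F. x \<in> e' \<longrightarrow> e' = e)"
      by (rule leaf_exists[OF less.prems(1,2) False less.prems(3)])
    then obtain x e where xe: "e \<in> F" "x \<in> e" "\<forall>e'\<in>F. x \<in> e' \<longrightarrow> e' = e"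
      by blast
    define F' where "F' = F - {e}"
    have cF': "card F' = card F - 1" unfolding F'_def using xe(1) less.prems(1) by (simp add: card_Diff_singleton)
    have cF: "card F > 0" using xe(1) less.prems(1) card_gt_0_iff by blast
    have lt: "card F' < card F" using cF' cF by linarith
    have FF: "F' \<subseteq> F" using F'_def by blast
    have fin': "finite F'" using FF less.prems(1) finite_subset by blast
    have two': "\<forall>e\<in>F'. \<exists>u v. u \<noteq> v \<and> e = {u,v}" using FF less.prems(2) by blast
    have nc': "\<not>(\<exists>cs. is_cycle F' cs)" using less.prems(3) cycle_mono[OF _ FF] by blast
    have ih: "card F' \<le> card (\<Union>F')"
      using less.hyps[OF lt fin' two' nc'] .
    have finW: "finite (\<Union>F)" using less.prems(2) by (intro finite_Union[OF less.prems(1)]) auto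
    have sub: "\<Union>F' \<subseteq> \<Union>F - {x}"
    proof
      fix y assume "y \<in> \<Union>F'"
      then obtain e' where e': "e' \<in> F'" "y \<in> e'" by blast
      have "e' \<in> F" "e' \<noteq> e" using e' F'_def by auto
      then have "x \<notin> e'" using xe(3) by blast
      then show "y \<in> \<Union>F - {x}" using e' \<open>e' \<in> F\<close> by blast
    qed
    have "card (\<Union>F') \<le> card (\<Union>F - {x})" using sub finW by (simp add: card_mono)
    also have "\<dots> = card (\<Union>F) - 1" using xe(1,2) finW by (intro card_Diff_singleton) blast+
    finally have "card (\<Union>F') \<le> card (\<Union>F) - 1" .
    moreover have "card (\<Union>F) > 0" using xe finW by (auto simp: card_gt_0_iff)
    ultimately show ?thesis using cF' cF ih by linarith
  qed
qed



definition US where "US V E ident t = fst (state_after V E ident t)"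
definition DS where "DS V E ident t = snd (state_after V E ident t)"

lemma st_Suc: "state_after V E ident (Suc t) = phase V ident (state_after V E ident t)"
  by (simp add: state_after_def)

lemma US_0: "US V E ident 0 = E" by (simp add: US_def state_after_def)
lemma DS_0: "DS V E ident 0 = {}" by (simp add: DS_def state_after_def)
lemma US_Suc: "US V E ident (Suc t) = {e\<in>US V E ident t. \<not> (\<exists>u v. e = {u, v} \<and> directs V ident (US V E ident t) u v)}"
  by (simp add: US_def st_Suc phase_def Let_def)
lemma DS_Suc: "DS V E ident (Suc t) = DS V E ident t \<union> {(u, v). directs V ident (US V E ident t) u v}"
  by (simp add: US_def DS_def st_Suc phase_def Let_def)

lemma avg_nonneg: "0 \<le> avg_deg V U"
  unfolding avg_deg_def by (rule divide_nonneg_nonneg) (rule of_nat_0_le_iff)+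

lemma arb_exists:
  assumes "finite E"
  shows "forest_partition E (arboricity E)"
proof -
  obtain h where h: "bij_betw h E {0..<card E}" using ex_bij_betw_finite_nat[OF assms] by blast
  have "forest_partition E (card E)"
    unfolding forest_partition_def
  proof (intro exI conjI allI impI ballI)
    fix e assume "e \<in> E" then show "h e < card E" using h by (auto simp: bij_betw_def)
  next
    fix j assume "j < card E"
    show "is_forest {e \<in> E. h e = j}"
      unfolding is_forest_def
    proof
      assume "\<exists>cs. is_cycle {e \<in> E. h e = j} cs"
      then obtain cs where cs: "is_cycle {e \<in> E. h e = j} cs" by blast
      have l: "3 \<le> length cs" "distinct cs" using cs by (auto simp: is_cycle_def)
      have all: "\<forall>i < length cs. {cs ! i, cs ! ((i + 1) mod length cs)} \<in> {e \<in> E. h e = j}"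
        using cs unfolding is_cycle_def by blast
      have m1: "(0+1) mod length cs = 1" "(1+1) mod length cs = 2" using l by simp_all
      have "{cs!0, cs!((0+1) mod length cs)} \<in> {e \<in> E. h e = j}" by (rule all[rule_format]) (use l in linarith)
      then have e1: "{cs!0, cs!1} \<in> {e \<in> E. h e = j}" unfolding m1 .
      have "{cs!1, cs!((1+1) mod length cs)} \<in> {e \<in> E. h e = j}" by (rule all[rule_format]) (use l in linarith)
      then have e2: "{cs!1, cs!2} \<in> {e \<in> E. h e = j}" unfolding m1 .
      have "{cs!0, cs!1} = {cs!1, cs!2}"
        using e1 e2 h by (auto simp: bij_betw_def inj_on_def)
      moreover have "cs!0 \<noteq> cs!1" "cs!0 \<noteq> cs!2"
      proof -
        have "0 < length cs" "1 < length cs" "2 < length cs" using l(1) by linarith+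
        then show "cs!0 \<noteq> cs!1" "cs!0 \<noteq> cs!2"
          using l(2) nth_eq_iff_index_eq[of cs 0 1] nth_eq_iff_index_eq[of cs 0 2] by simp_all
      qed
      ultimately show False by (metis insertE singletonD insertI1)
    qed
  qed
  then show ?thesis unfolding arboricity_def by (rule LeastI)
qed

context
  fixes V :: "'a set" and E :: "'a set set" and ident :: "'a \<Rightarrow> nat"
  assumes sg: "simple_graph V E" and inj: "inj_on ident V"
begin

lemma finV: "finite V" using sg by (simp add: simple_graph_def)

lemma edgeE: "e \<in> E \<Longrightarrow> \<exists>u v. u \<noteq> v \<and> u \<in> V \<and> v \<in> V \<and> e = {u, v}"
  using sg by (simp add: simple_graph_def)

lemma finE: "finite E"
proof -
  have "E \<subseteq> Pow V" using edgeE by blast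
  then show ?thesis using finV finite_subset by blast
qed

lemma US_step: "US V E ident (Suc t) \<subseteq> US V E ident t"
  by (simp add: US_Suc)

lemma US_anti: "s \<le> t \<Longrightarrow> US V E ident t \<subseteq> US V E ident s"
  using lift_Suc_antimono_le[of "US V E ident", OF US_step] by blast

lemma US_sub: "US V E ident t \<subseteq> E"
  using US_anti[of 0 t] by (simp add: US_0)

lemma finU: "finite (US V E ident t)"
  using US_sub finE finite_subset by blast

lemma rdeg_pos: "e \<in> US V E ident t \<Longrightarrow> u \<in> e \<Longrightarrow> 0 < rdeg (US V E ident t) u"
  unfolding rdeg_def using finU[of t] by (auto simp: card_gt_0_iff)

lemma edge_at:
  assumes "e \<in> US V E ident t" "u \<in> e"
  obtains w where "w \<noteq> u" "u \<in> V" "w \<in> V" "e = {u, w}"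
proof -
  obtain a b where ab: "a \<noteq> b" "a \<in> V" "b \<in> V" "e = {a, b}" using edgeE assms US_sub by blast
  show ?thesis
  proof (cases "u = a")
    case True then show ?thesis using that[of b] ab by simp
  next
    case False then have "u = b" using ab assms by blast
    then show ?thesis using that[of a] ab by (simp add: insert_commute)
  qed
qed

lemma active_clears:
  assumes act: "is_active V (US V E ident t) u"
  shows "rdeg (US V E ident (Suc t)) u = 0"
proof -
  let ?U = "US V E ident t"
  have "{e \<in> US V E ident (Suc t). u \<in> e} = {}"
  proof (rule ccontr)
    assume "{e \<in> US V E ident (Suc t). u \<in> e} \<noteq> {}"
    then obtain e where e: "e \<in> US V E ident (Suc t)" "u \<in> e" by blast
    then have eU: "e \<in> ?U" and nd: "\<not> (\<exists>a b. e = {a, b} \<and> directs V ident ?U a b)"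
      by (auto simp: US_Suc)
    obtain w where w: "w \<noteq> u" "u \<in> V" "w \<in> V" "e = {u, w}" using edge_at[OF eU e(2)] by blast
    have wp: "0 < rdeg ?U w" using rdeg_pos[OF eU] w by blast
    have ew: "{u, w} \<in> ?U" using eU w by simp
    show False
    proof (cases "is_waiting V ?U w")
      case True
      then have "directs V ident ?U u w" using act ew w by (simp add: directs_def)
      then show False using nd w by blast
    next
      case False
      then have aw: "is_active V ?U w" using wp by (simp add: is_active_def is_waiting_def)
      have "ident u \<noteq> ident w" using inj w by (metis inj_onD)
      then consider "ident u < ident w" | "ident w < ident u" by linarith
      then show False
      proof cases
        case 1
        then have "directs V ident ?U u w" using act aw ew w by (simp add: directs_def)
        then show False using nd w by blast
      next
        case 2
        have ew2: "{w, u} \<in> ?U" using ew by (simp add: insert_commute)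
        have "directs V ident ?U w u" using act aw ew2 w 2 by (simp add: directs_def)
        moreover have "e = {w, u}" using w by (simp add: insert_commute)
        ultimately show False using nd by blast
      qed
    qed
  qed
  then show ?thesis unfolding rdeg_def by (simp only: card.empty)
qed

lemma rdeg_anti: "s \<le> t \<Longrightarrow> rdeg (US V E ident t) u \<le> rdeg (US V E ident s) u"
  unfolding rdeg_def using US_anti[of s t] finU[of s]
  by (intro card_mono) auto

lemma active_once:
  assumes "is_active V (US V E ident s) u" "s < t"
  shows "\<not> is_active V (US V E ident t) u"
proof -
  have "rdeg (US V E ident t) u \<le> rdeg (US V E ident (Suc s)) u" using assms(2) rdeg_anti by simp
  then have "rdeg (US V E ident t) u = 0" using active_clears[OF assms(1)] by simp
  then show ?thesis by (simp add: is_active_def)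
qed

lemma DS_char: "(u, v) \<in> DS V E ident t \<Longrightarrow> \<exists>s<t. directs V ident (US V E ident s) u v"
proof (induction t)
  case 0 then show ?case by (simp add: DS_0)
next
  case (Suc t)
  then show ?case by (auto simp: DS_Suc less_Suc_eq)
qed

lemma sum_rdeg:
  "(\<Sum>u\<in>V. rdeg (US V E ident t) u) = 2 * card (US V E ident t)"
proof -
  let ?U = "US V E ident t"
  have "(\<Sum>u\<in>V. rdeg ?U u) = (\<Sum>u\<in>V. \<Sum>e\<in>?U. if u \<in> e then 1 else 0)"
    unfolding rdeg_def using finU[of t] by (simp add: sum.inter_filter[symmetric])
  also have "\<dots> = (\<Sum>e\<in>?U. \<Sum>u\<in>V. if u \<in> e then 1 else 0)" by (rule sum.swap)
  also have "\<dots> = (\<Sum>e\<in>?U. 2)"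
  proof (rule sum.cong)
    fix e assume e: "e \<in> ?U"
    obtain a b where ab: "a \<noteq> b" "a \<in> V" "b \<in> V" "e = {a, b}" using edgeE e US_sub by blast
    have "(\<Sum>u\<in>V. if u \<in> e then 1 else 0) = card {u \<in> V. u \<in> e}"
      using finV by (simp add: sum.inter_filter[symmetric])
    also have "{u \<in> V. u \<in> e} = {a, b}" using ab by auto
    finally show "(\<Sum>u\<in>V. if u \<in> e then 1 else 0) = (2::nat)" using ab by simp
  qed simp
  finally show ?thesis by simp
qed

lemma card_U_bound:
  "card (US V E ident t) \<le> arboricity E * card {u \<in> V. 0 < rdeg (US V E ident t) u}"
proof -
  let ?U = "US V E ident t"
  let ?W = "{u \<in> V. 0 < rdeg ?U u}"
  let ?a = "arboricity E"
  obtain f where f: "\<forall>e\<in>E. f e < ?a" "\<forall>j<?a. is_forest {e\<in>E. f e = j}"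
    using arb_exists[OF finE] unfolding forest_partition_def by blast
  have U_eq: "?U = (\<Union>j\<in>{..<?a}. {e \<in> ?U. f e = j})" using f(1) US_sub by auto
  have "card ?U \<le> (\<Sum>j\<in>{..<?a}. card {e \<in> ?U. f e = j})"
    by (subst U_eq) (rule card_UN_le, simp)
  also have "\<dots> \<le> (\<Sum>j\<in>{..<?a}. card ?W)"
  proof (rule sum_mono)
    fix j assume j: "j \<in> {..<?a}"
    let ?F = "{e \<in> ?U. f e = j}"
    have finF: "finite ?F" using finU[of t] by simp
    have two: "\<forall>e\<in>?F. \<exists>u v. u \<noteq> v \<and> e = {u,v}" using edgeE US_sub by blast
    have sub: "?F \<subseteq> {e\<in>E. f e = j}" using US_sub by blast
    have nc: "\<not>(\<exists>cs. is_cycle ?F cs)"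
      using f(2) j cycle_mono[OF _ sub] by (auto simp: is_forest_def)
    have "card ?F \<le> card (\<Union>?F)" by (rule forest_card[OF finF two nc])
    also have "\<dots> \<le> card ?W"
    proof (rule card_mono)
      show "finite ?W" using finV by simp
      show "\<Union>?F \<subseteq> ?W"
      proof
        fix u assume "u \<in> \<Union>?F"
        then obtain e where e: "e \<in> ?U" "u \<in> e" by blast
        obtain w where "u \<in> V" using edge_at[OF e] by blast
        then show "u \<in> ?W" using rdeg_pos[OF e] by blast
      qed
    qed
    finally show "card ?F \<le> card ?W" .
  qed
  also have "\<dots> = ?a * card ?W" by simp
  finally show ?thesis .
qed

lemma avg_bound: "avg_deg V (US V E ident t) \<le> 2 * real (arboricity E)"
proof -
  let ?U = "US V E ident t"
  let ?W = "{u \<in> V. 0 < rdeg ?U u}"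
  have av: "avg_deg V ?U = real (2 * card ?U) / real (card ?W)"
    unfolding avg_deg_def using sum_rdeg[of t] by simp
  have cb: "real (card ?U) \<le> real (arboricity E) * real (card ?W)"
    using card_U_bound[of t] by (metis of_nat_le_iff of_nat_mult)
  show ?thesis
  proof (cases "card ?W = 0")
    case True then show ?thesis using av by simp
  next
    case False
    then have "real (card ?W) > 0" by simp
    then show ?thesis using av cb by (simp add: divide_le_eq)
  qed
qed

lemma out_bound: "real (out_deg (DS V E ident T) u) \<le> 4 * real (arboricity E)"
proof (cases "\<exists>s<T. is_active V (US V E ident s) u")
  case False
  have "{v. (u, v) \<in> DS V E ident T} = {}"
    using DS_char False by (fastforce simp: directs_def)
  then show ?thesis by (simp add: out_deg_def)
next
  case True
  then obtain s where s: "s < T" "is_active V (US V E ident s) u" by blast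
  let ?U = "US V E ident s"
  have sub: "{v. (u, v) \<in> DS V E ident T} \<subseteq> {v. {u, v} \<in> ?U}"
  proof
    fix v assume "v \<in> {v. (u, v) \<in> DS V E ident T}"
    then obtain s' where s': "s' < T" "directs V ident (US V E ident s') u v" using DS_char by blast
    then have a': "is_active V (US V E ident s') u" by (auto simp: directs_def)
    have "s' = s"
    proof (rule ccontr)
      assume "s' \<noteq> s"
      then consider "s' < s" | "s < s'" by linarith
      then show False using active_once a' s(2) by cases blast+
    qed
    then show "v \<in> {v. {u, v} \<in> ?U}" using s' by (simp add: directs_def)
  qed
  have "card {v. (u, v) \<in> DS V E ident T} \<le> card {v. {u, v} \<in> ?U}"
  proof (rule card_inj_on_le[where f = "\<lambda>v. v"])
    show "inj_on (\<lambda>v. v) {v. (u, v) \<in> DS V E ident T}" by simp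
    show "(\<lambda>v. v) ` {v. (u, v) \<in> DS V E ident T} \<subseteq> {v. {u, v} \<in> ?U}" using sub by simp
    have "{v. {u, v} \<in> ?U} \<subseteq> \<Union>?U" by blast
    then show "finite {v. {u, v} \<in> ?U}"
      using finU[of s] edgeE US_sub finite_subset
      by (metis (no_types, lifting) finite_Union finite_insert finite.emptyI subsetD)
  qed
  also have "\<dots> \<le> rdeg ?U u"
    unfolding rdeg_def
  proof (rule card_inj_on_le[where f = "\<lambda>v. {u, v}"])
    show "inj_on (\<lambda>v. {u, v}) {v. {u, v} \<in> ?U}"
      by (rule inj_onI) (metis doubleton_eq_iff)
    show "(\<lambda>v. {u, v}) ` {v. {u, v} \<in> ?U} \<subseteq> {e \<in> ?U. u \<in> e}" by auto
    show "finite {e \<in> ?U. u \<in> e}" using finU[of s] by simp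
  qed
  finally have "real (out_deg (DS V E ident T) u) \<le> real (rdeg ?U u)"
    by (simp add: out_deg_def)
  also have "\<dots> \<le> 2 * avg_deg V ?U" using s(2) by (simp add: is_active_def)
  also have "\<dots> \<le> 4 * real (arboricity E)" using avg_bound[of s] by simp
  finally show ?thesis .
qed

end


context
  fixes V :: "'a set" and E :: "'a set set" and ident :: "'a \<Rightarrow> nat"
  assumes sg: "simple_graph V E" and inj: "inj_on ident V"
begin

definition WS where "WS t = {u \<in> V. 0 < rdeg (US V E ident t) u}"

lemma halve: "2 * card (WS (Suc t)) \<le> card (WS t)"
proof -
  let ?U = "US V E ident t"
  let ?Wa = "{u \<in> V. is_waiting V ?U u}"
  have fV: "finite V" using finV[OF sg inj] .
  have s1: "WS (Suc t) \<subseteq> ?Wa"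
  proof
    fix u assume "u \<in> WS (Suc t)"
    then have u: "u \<in> V" "0 < rdeg (US V E ident (Suc t)) u" by (auto simp: WS_def)
    have "rdeg (US V E ident (Suc t)) u \<le> rdeg ?U u" using rdeg_anti[OF sg inj, of t "Suc t"] by simp
    then have p: "0 < rdeg ?U u" using u by linarith
    have "\<not> is_active V ?U u" using active_clears[OF sg inj, of t u] u by auto
    then show "u \<in> ?Wa" using p u by (auto simp: is_active_def is_waiting_def)
  qed
  have s2: "?Wa \<subseteq> WS t"
  proof
    fix u assume u: "u \<in> ?Wa"
    have "0 \<le> avg_deg V ?U" by (rule avg_nonneg)
    then show "u \<in> WS t" using u by (auto simp: is_waiting_def WS_def)
  qed
  have fW: "finite (WS t)" using fV by (simp add: WS_def)
  have key: "2 * card ?Wa \<le> card (WS t)"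
  proof (cases "?Wa = {}")
    case True then show ?thesis unfolding True by simp
  next
    case False
    have fWa: "finite ?Wa" using fV by simp
    define S where "S = real (\<Sum>u\<in>V. rdeg ?U u)"
    define N where "N = real (card (WS t))"
    have Npos: "N > 0" unfolding N_def using False s2 fW
      by (metis card_gt_0_iff of_nat_0_less_iff subset_empty)
    have av: "avg_deg V ?U = S / N" unfolding avg_deg_def S_def N_def WS_def by simp
    have Sge: "(\<Sum>u\<in>?Wa. real (rdeg ?U u)) \<le> S"
      unfolding S_def of_nat_sum using fV by (intro sum_mono2) auto
    have "(\<Sum>u\<in>?Wa. 2 * (S / N)) < (\<Sum>u\<in>?Wa. real (rdeg ?U u))"
      using fWa False by (intro sum_strict_mono) (auto simp: is_waiting_def av)
    then have lt: "real (card ?Wa) * (2 * (S / N)) < S" using Sge by simp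
    have S0: "S \<ge> 0" unfolding S_def by (rule of_nat_0_le_iff)
    have Spos: "S > 0"
    proof (rule ccontr)
      assume "\<not> S > 0" then have "S = 0" using S0 by simp
      then show False using lt by simp
    qed
    have "real (card ?Wa) * 2 * S < N * S" using lt Npos
      by (simp add: field_simps)
    then have "real (card ?Wa) * 2 < N" using Spos by simp
    then show ?thesis unfolding N_def by linarith
  qed
  have "card (WS (Suc t)) \<le> card ?Wa" using s1 fV by (intro card_mono) auto
  then show ?thesis using key by linarith
qed

lemma iter: "2 ^ t * card (WS t) \<le> card V"
proof (induction t)
  case 0
  have "WS 0 \<subseteq> V" by (auto simp: WS_def)
  then show ?case using finV[OF sg inj] by (simp add: card_mono)
next
  case (Suc t)
  have "2 ^ Suc t * card (WS (Suc t)) = 2 ^ t * (2 * card (WS (Suc t)))" by simp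
  also have "\<dots> \<le> 2 ^ t * card (WS t)" using halve[of t] by simp
  finally show ?case using Suc by linarith
qed

lemma done_after: assumes "card V < 2 ^ T" shows "US V E ident T = {}"
proof -
  have "2 ^ T * card (WS T) \<le> card V" by (rule iter)
  then have "card (WS T) = 0" using assms
    by (metis le_less_trans less_le_not_le mult.right_neutral mult_le_mono2 not_gr0 Suc_leI One_nat_def)
  then have W0: "WS T = {}" using finV[OF sg inj] by (simp add: WS_def)
  show ?thesis
  proof (rule ccontr)
    assume "US V E ident T \<noteq> {}"
    then obtain e where e: "e \<in> US V E ident T" by blast
    obtain a b where ab: "a \<noteq> b" "a \<in> V" "b \<in> V" "e = {a, b}"
      using edgeE[OF sg inj] e US_sub[OF sg inj] by blast
    have "0 < rdeg (US V E ident T) a" using rdeg_pos[OF sg inj e] ab by simp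
    then have "a \<in> WS T" using ab by (simp add: WS_def)
    then show False using W0 by simp
  qed
qed

end

theorem lemma4p1:
  "\<exists>c1 c2 :: real. c1 > 0 \<and> c2 > 0 \<and>
    (\<forall>(V :: 'a set) (E :: 'a set set) (ident :: 'a \<Rightarrow> nat).
       simple_graph V E \<and> inj_on ident V \<longrightarrow>
       (\<exists>T :: nat. real T \<le> c1 * (log 2 (real (card V)) + 1) \<and>
          fst (state_after V E ident T) = {} \<and>
          (\<forall>u\<in>V. real (out_deg (snd (state_after V E ident T)) u)
                     \<le> c2 * real (arboricity E))))"
proof -
  have main: "\<forall>(V :: 'a set) (E :: 'a set set) (ident :: 'a \<Rightarrow> nat).
       simple_graph V E \<and> inj_on ident V \<longrightarrow>
       (\<exists>T :: nat. real T \<le> 1 * (log 2 (real (card V)) + 1) \<and>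
          fst (state_after V E ident T) = {} \<and>
          (\<forall>u\<in>V. real (out_deg (snd (state_after V E ident T)) u)
                     \<le> 4 * real (arboricity E)))"
  proof (intro allI impI)
  fix V :: "'a set" and E :: "'a set set" and ident :: "'a \<Rightarrow> nat"
  assume "simple_graph V E \<and> inj_on ident V"
  then have sg: "simple_graph V E" and inj: "inj_on ident V" by auto
  define n where "n = card V"
  define T where "T = nat \<lfloor>log 2 (real n)\<rfloor> + 1"
  have lg0: "0 \<le> log 2 (real n)"
  proof (cases "n = 0")
    case True then show ?thesis by (simp add: log_def)
  next
    case False then show ?thesis by simp
  qed
  have rT: "real T = real_of_int \<lfloor>log 2 (real n)\<rfloor> + 1"
    unfolding T_def using lg0 by simp
  have Tb: "real T \<le> 1 * (log 2 (real (card V)) + 1)"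
    using rT n_def by simp
  have nT: "n < 2 ^ T"
  proof (cases "n = 0")
    case True then show ?thesis by simp
  next
    case False
    have "log 2 (real n) < real T" using rT by linarith
    then have "real n < 2 powr real T" using False by (simp add: log_less_iff)
    then have "real n < 2 ^ T" by (simp add: powr_realpow)
    then show ?thesis by (metis of_nat_less_iff of_nat_numeral of_nat_power)
  qed
  have U0: "US V E ident T = {}" using done_after[OF sg inj] nT n_def by simp
  show "\<exists>T :: nat. real T \<le> 1 * (log 2 (real (card V)) + 1) \<and>
          fst (state_after V E ident T) = {} \<and>
          (\<forall>u\<in>V. real (out_deg (snd (state_after V E ident T)) u)
                     \<le> 4 * real (arboricity E))"
    using Tb U0 out_bound[OF sg inj, of T] unfolding US_def DS_def by blast
qed
  show ?thesis
    by (intro exI[of _ "1::real"] exI[of _ "4::real"] conjI) (simp, simp, rule main)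
qed

end
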